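(* Let $A=[a_{ij}]\in M_{m,n}(\mathbb{R})$ have rank $r>1$ and be diagonally eliminable up to $r$, and let $0\leq k<r$. Then the Gauss-Jordan operation matrix $\mathcal{G}_{2k+1}=[g^{(2k+1)}_{ij}]_{m\times m}$ satisfies $g^{(2k+1)}_{ij}=0$ for $i\neq j$, $g^{(2k+1)}_{ii}=1$ for $i\neq k+1$, and $g^{(2k+1)}_{k+1,k+1}=\dfrac{m_k}{m_{k+1}}$; and $\mathcal{G}_{2k+2}=[g^{(2k+2)}_{ij}]_{m\times m}$ satisfies $$g^{(2k+2)}_{ij}=\begin{cases}0 & \text{if } j\notin\{i,k+1\},\\ 1 & \text{if } i=j,\\ (-1)^{k+i+1}\dfrac{m^{1\dots k}_{1\dots i-1,\,i+1\dots k+1}}{m_k} & \text{if } 1\leq i\leq k,\ j=k+1,\\[2mm] -\dfrac{m^{1\dots k\,i}_{1\dots k\,k+1}}{m_k} & \text{if } k+1<i\leq m,\ j=k+1.\end{cases}$$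
   Context: Gauss-Jordan procedure: for $A\in M_{m,n}(\mathbb{R})$ set $A^{(0)}=A$. For $k\geq 0$, if $A^{(2k)}=[a^{(2k)}_{ij}]$ is defined and $a^{(2k)}_{k+1,k+1}\neq 0$, let $\mathcal{G}_{2k+1}$ be the $m\times m$ diagonal matrix with all diagonal entries $1$ except the $(k+1,k+1)$ entry, which is $1/a^{(2k)}_{k+1,k+1}$, and set $A^{(2k+1)}=\mathcal{G}_{2k+1}A^{(2k)}=[a^{(2k+1)}_{ij}]$; then let $\mathcal{G}_{2k+2}=[g_{ij}]_{m\times m}$ with $g_{ii}=1$, $g_{i,k+1}=-a^{(2k+1)}_{i,k+1}$ for $i\neq k+1$, and all other entries $0$, and set $A^{(2k+2)}=\mathcal{G}_{2k+2}A^{(2k+1)}$. The $\mathcal{G}_q$ are the Gauss-Jordan operation matrices. A matrix $A$ of rank $r\geq 1$ is diagonally eliminable up to $r$ if for each $k=1,\dots,r$ the matrix $A^{(2k-2)}$ is defined and $a^{(2k-2)}_{kk}\neq 0$. Minors: $m^{i_1\dots i_p}_{j_1\dots j_p}$ (increasing indices) is the determinant of the submatrix of $A$ with rows $i_1,\dots,i_p$ and columns $j_1,\dots,j_p$; $m^{1\dots k}_{1\dots i-1,\,i+1\dots k+1}$ uses rows $1,\dots,k$ and columns $1,\dots,k+1$ with $i$ removed. $m_k=m^{1\dots k}_{1\dots k}$ and $m_0=1$. *)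

theory Defs
  imports "Jordan_Normal_Form.DL_Rank_Submatrix" "Jordan_Normal_Form.Determinant"
begin

text \<open>Matrices are JNF matrices (0-based internally). The functions ent and minor below
  expose the paper's 1-based indexing: ent G i j is the (i,j) entry with 1 \<le> i,j.\<close>

definition ent :: "'a mat \<Rightarrow> nat \<Rightarrow> nat \<Rightarrow> 'a" where
  "ent G i j = G $$ (i - 1, j - 1)"

definition minor :: "'a::comm_ring_1 mat \<Rightarrow> nat set \<Rightarrow> nat set \<Rightarrow> 'a" where
  "minor A I J = det (submatrix A ((\<lambda>i. i - 1) ` I) ((\<lambda>j. j - 1) ` J))"

text \<open>Leading principal minor m_k (m_0 = 1 as determinant of the empty matrix).\<close>
definition lminor :: "'a::comm_ring_1 mat \<Rightarrow> nat \<Rightarrow> 'a" where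
  "lminor A k = minor A {1..k} {1..k}"

text \<open>Gauss-Jordan operation matrices, built from the current matrix B; the pivot is the
  0-based index p (= paper index k+1 with p = k).\<close>
definition gj_odd :: "real mat \<Rightarrow> nat \<Rightarrow> real mat" where
  "gj_odd B p = mat (dim_row B) (dim_row B)
     (\<lambda>(i,j). if i = j then (if i = p then 1 / B $$ (p,p) else 1) else 0)"

definition gj_even :: "real mat \<Rightarrow> nat \<Rightarrow> real mat" where
  "gj_even C p = mat (dim_row C) (dim_row C)
     (\<lambda>(i,j). if i = j then 1 else if j = p then - C $$ (i,p) else 0)"

text \<open>gj_seq A q = Some A^(q) if A^(q) is defined, None otherwise.\<close>
fun gj_seq :: "real mat \<Rightarrow> nat \<Rightarrow> real mat option" where
  "gj_seq A 0 = Some A"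
| "gj_seq A (Suc q) =
     (case gj_seq A q of
        None \<Rightarrow> None
      | Some B \<Rightarrow>
          (if even q then
             (if q div 2 < dim_row B \<and> q div 2 < dim_col B \<and> B $$ (q div 2, q div 2) \<noteq> 0
              then Some (gj_odd B (q div 2) * B) else None)
           else Some (gj_even B (q div 2) * B)))"

fun gj_op :: "real mat \<Rightarrow> nat \<Rightarrow> real mat option" where
  "gj_op A 0 = None"
| "gj_op A (Suc q) =
     (case gj_seq A q of
        None \<Rightarrow> None
      | Some B \<Rightarrow>
          (if even q then
             (if q div 2 < dim_row B \<and> q div 2 < dim_col B \<and> B $$ (q div 2, q div 2) \<noteq> 0
              then Some (gj_odd B (q div 2)) else None)
           else Some (gj_even B (q div 2))))"

definition diag_elim_upto :: "real mat \<Rightarrow> nat \<Rightarrow> bool" where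
  "diag_elim_upto A r \<longleftrightarrow>
     (\<forall>k\<in>{1..r}. \<exists>B. gj_seq A (2*k - 2) = Some B \<and> k \<le> dim_row B \<and> k \<le> dim_col B
        \<and> ent B k k \<noteq> 0)"

end

theory Submission
  imports Defs
begin

definition sub :: "'a mat \<Rightarrow> (nat \<Rightarrow> nat) \<Rightarrow> (nat \<Rightarrow> nat) \<Rightarrow> nat \<Rightarrow> nat \<Rightarrow> 'a mat" where
  "sub X f g s t = mat s t (\<lambda>(p,q). X $$ (f p, g q))"

lemma sub_carrier[simp]: "sub X f g s t \<in> carrier_mat s t"
  unfolding sub_def by simp
lemma sub_dim[simp]: "dim_row (sub X f g s t) = s" "dim_col (sub X f g s t) = t"
  unfolding sub_def by simp_all
lemma sub_index[simp]: "p < s \<Longrightarrow> q < t \<Longrightarrow> sub X f g s t $$ (p,q) = X $$ (f p, g q)"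
  unfolding sub_def by simp

lemma pick_strict_mono:
  assumes "strict_mono f" "j < N"
  shows "pick (f ` {..<N}) j = f j"
  using assms(2)
proof (induction j)
  case 0
  show ?case unfolding pick.simps
  proof (rule Least_equality)
    show "f 0 \<in> f ` {..<N}" using 0 by auto
    fix y assume "y \<in> f ` {..<N}"
    then obtain l where "y = f l" by auto
    then show "f 0 \<le> y" using assms(1) by (simp add: strict_mono_less_eq)
  qed
next
  case (Suc j)
  then have IH: "pick (f ` {..<N}) j = f j" by simp
  show ?case unfolding pick.simps IH
  proof (rule Least_equality)
    show "f (Suc j) \<in> f ` {..<N} \<and> f j < f (Suc j)" using Suc.prems assms(1)
      by (auto simp: strict_mono_def)
    fix y assume "y \<in> f ` {..<N} \<and> f j < y"
    then obtain l where "y = f l" "f j < f l" by auto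
    then have "j < l" using assms(1) by (simp add: strict_mono_less)
    then show "f (Suc j) \<le> y" using \<open>y = f l\<close> assms(1) by (simp add: strict_mono_less_eq)
  qed
qed

lemma submatrix_sub:
  assumes f: "strict_mono f" and g: "strict_mono g"
    and A: "A \<in> carrier_mat m n"
    and fr: "\<forall>p<N. f p < m" and gr: "\<forall>q<M. g q < n"
  shows "submatrix A (f ` {..<N}) (g ` {..<M}) = sub A f g N M"
proof -
  have c1: "{i. i < dim_row A \<and> i \<in> f ` {..<N}} = f ` {..<N}" using fr A by auto
  have c2: "{i. i < dim_col A \<and> i \<in> g ` {..<M}} = g ` {..<M}" using gr A by auto
  have i1: "card (f ` {..<N}) = N" using strict_mono_imp_inj_on[OF f] by (simp add: card_image inj_on_subset)
  have i2: "card (g ` {..<M}) = M" using strict_mono_imp_inj_on[OF g] by (simp add: card_image inj_on_subset)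
  show ?thesis unfolding submatrix_def sub_def c1 c2 i1 i2
    by (rule eq_matI) (auto simp: pick_strict_mono[OF f] pick_strict_mono[OF g])
qed

lemma sub_mult:
  assumes E: "E \<in> carrier_mat m m" and A: "A \<in> carrier_mat m n"
    and inj: "inj_on f {..<s}" and fr: "\<forall>p<s. f p < m" and gr: "\<forall>q<t. g q < n"
    and z: "\<forall>p<s. \<forall>l<m. l \<notin> f ` {..<s} \<longrightarrow> E $$ (f p, l) = 0"
  shows "sub (E * A) f g s t = sub E f f s s * sub A f g s t"
proof (rule eq_matI)
  fix p q assume p: "p < dim_row (sub E f f s s * sub A f g s t)"
    and q: "q < dim_col (sub E f f s s * sub A f g s t)"
  then have p: "p < s" and q: "q < t" by auto
  have "sub (E * A) f g s t $$ (p,q) = (\<Sum>l\<in>{0..<m}. E $$ (f p, l) * A $$ (l, g q))"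
    using p q fr gr E A by (simp add: scalar_prod_def)
  also have "\<dots> = (\<Sum>l\<in>f ` {..<s}. E $$ (f p, l) * A $$ (l, g q))"
    by (rule sum.mono_neutral_right) (use fr z p in auto)
  also have "\<dots> = (\<Sum>p'<s. E $$ (f p, f p') * A $$ (f p', g q))"
    by (subst sum.reindex[OF inj]) simp
  also have "\<dots> = (sub E f f s s * sub A f g s t) $$ (p,q)"
    using p q by (simp add: scalar_prod_def atLeast0LessThan)
  finally show "sub (E * A) f g s t $$ (p,q) = (sub E f f s s * sub A f g s t) $$ (p,q)" .
qed auto


lemma gj_odd_carrier[simp]: "B \<in> carrier_mat m n \<Longrightarrow> gj_odd B k \<in> carrier_mat m m"
  unfolding gj_odd_def by simp
lemma gj_even_carrier[simp]: "B \<in> carrier_mat m n \<Longrightarrow> gj_even B k \<in> carrier_mat m m"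
  unfolding gj_even_def by simp

lemma gj_odd_mult:
  assumes B: "B \<in> carrier_mat m n" and X: "X \<in> carrier_mat m t" and i: "i < m" and j: "j < t"
    and k: "k < m"
  shows "(gj_odd B k * X) $$ (i,j) = (if i = k then X $$ (k,j) / B $$ (k,k) else X $$ (i,j))"
proof -
  have "(gj_odd B k * X) $$ (i,j) = (\<Sum>l\<in>{0..<m}. gj_odd B k $$ (i,l) * X $$ (l,j))"
    using B X i j by (simp add: scalar_prod_def gj_odd_def)
  also have "\<dots> = (\<Sum>l\<in>{0..<m}. if l = i then (if i = k then X $$ (k,j) / B $$ (k,k) else X $$ (i,j)) else 0)"
    by (rule sum.cong) (use B i in \<open>auto simp: gj_odd_def\<close>)
  also have "\<dots> = (if i = k then X $$ (k,j) / B $$ (k,k) else X $$ (i,j))"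
    using i by (simp add: sum.delta')
  finally show ?thesis .
qed

lemma gj_even_mult:
  assumes C: "C \<in> carrier_mat m n" and X: "X \<in> carrier_mat m t" and i: "i < m" and j: "j < t"
    and k: "k < m"
  shows "(gj_even C k * X) $$ (i,j) = (if i = k then X $$ (k,j) else X $$ (i,j) - C $$ (i,k) * X $$ (k,j))"
proof -
  have "(gj_even C k * X) $$ (i,j) = (\<Sum>l\<in>{0..<m}. gj_even C k $$ (i,l) * X $$ (l,j))"
    using C X i j by (simp add: scalar_prod_def gj_even_def)
  also have "\<dots> = (\<Sum>l\<in>{0..<m}. (if l = i then X $$ (i,j) else 0)
      + (if l = k then (if i = k then 0 else - C $$ (i,k) * X $$ (k,j)) else 0))"
    by (rule sum.cong) (use C i k in \<open>auto simp: gj_even_def\<close>)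
  also have "\<dots> = (if i = k then X $$ (k,j) else X $$ (i,j) - C $$ (i,k) * X $$ (k,j))"
    using i k by (simp add: sum.distrib sum.delta')
  finally show ?thesis .
qed

definition gjinv :: "real mat \<Rightarrow> nat \<Rightarrow> nat \<Rightarrow> nat \<Rightarrow> real mat \<Rightarrow> real mat \<Rightarrow> bool" where
  "gjinv A m n k B E \<longleftrightarrow> B \<in> carrier_mat m n \<and> E \<in> carrier_mat m m \<and> B = E * A
    \<and> (\<forall>i<m. \<forall>l<m. k \<le> l \<longrightarrow> E $$ (i,l) = (if i = l then 1 else 0))
    \<and> (\<forall>i<m. \<forall>j<k. B $$ (i,j) = (if i = j then 1 else 0))"

lemma gjinv_step:
  assumes inv: "gjinv A m n k B E" and A: "A \<in> carrier_mat m n"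
    and k: "k < m" "k < n" and piv: "B $$ (k,k) \<noteq> 0"
  shows "gjinv A m n (Suc k) (gj_even (gj_odd B k * B) k * (gj_odd B k * B))
           (gj_even (gj_odd B k * B) k * (gj_odd B k * E))"
proof -
  from inv have B: "B \<in> carrier_mat m n" and E: "E \<in> carrier_mat m m" and BE: "B = E * A"
    and Ec: "\<And>i l. i < m \<Longrightarrow> l < m \<Longrightarrow> k \<le> l \<Longrightarrow> E $$ (i,l) = (if i = l then 1 else 0)"
    and Bc: "\<And>i j. i < m \<Longrightarrow> j < k \<Longrightarrow> B $$ (i,j) = (if i = j then 1 else 0)"
    unfolding gjinv_def by auto
  define G1 where "G1 = gj_odd B k"
  define B1 where "B1 = G1 * B"
  define G2 where "G2 = gj_even B1 k"
  have G1: "G1 \<in> carrier_mat m m" using B by (simp add: G1_def)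
  have B1: "B1 \<in> carrier_mat m n" using G1 B by (simp add: B1_def)
  have G2: "G2 \<in> carrier_mat m m" using B1 by (simp add: G2_def)
  have B1e: "B1 $$ (i,j) = (if i = k then B $$ (k,j) / B $$ (k,k) else B $$ (i,j))"
    if "i < m" "j < n" for i j
    unfolding B1_def G1_def by (rule gj_odd_mult[OF B B that k(1)])
  have G1E: "(G1 * E) $$ (i,j) = (if i = k then E $$ (k,j) / B $$ (k,k) else E $$ (i,j))"
    if "i < m" "j < m" for i j
    unfolding G1_def by (rule gj_odd_mult[OF B E that k(1)])
  have G1Ec: "G1 * E \<in> carrier_mat m m" using G1 E by simp
  have prod: "G2 * B1 = (G2 * (G1 * E)) * A"
    using G1 G2 E A by (simp add: B1_def BE assoc_mult_mat[of _ m m _ m _ n])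
  have c1: "(G2 * (G1 * E)) $$ (i,l) = (if i = l then 1 else 0)" if "i < m" "l < m" "Suc k \<le> l" for i l
    unfolding G2_def using gj_even_mult[OF B1 G1Ec that(1,2) k(1)] that G1E Ec k by auto
  have c2: "(G2 * B1) $$ (i,j) = (if i = j then 1 else 0)" if "i < m" "j < Suc k" for i j
  proof -
    have "(G2 * B1) $$ (i,j) = (if i = k then B1 $$ (k,j) else B1 $$ (i,j) - B1 $$ (i,k) * B1 $$ (k,j))"
      unfolding G2_def using gj_even_mult[OF B1 B1 that(1) _ k(1)] that k by auto
    then show ?thesis using that B1e Bc k piv by (cases "j = k") auto
  qed
  show ?thesis
    unfolding gjinv_def G2_def[symmetric] B1_def[symmetric] G1_def[symmetric]
    using prod c1 c2 G2 B1 G1Ec by (metis mult_carrier_mat)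
qed


lemma gjinv_exists:
  assumes A: "A \<in> carrier_mat m n" and de: "diag_elim_upto A r"
  shows "k \<le> r \<Longrightarrow> \<exists>B E. gj_seq A (2*k) = Some B \<and> gjinv A m n k B E"
proof (induction k)
  case 0
  have "gjinv A m n 0 A (1\<^sub>m m)" unfolding gjinv_def using A by auto
  then show ?case by auto
next
  case (Suc k)
  then obtain B E where B: "gj_seq A (2*k) = Some B" and inv: "gjinv A m n k B E" by auto
  from de Suc.prems obtain B' where B': "gj_seq A (2 * Suc k - 2) = Some B'"
    "Suc k \<le> dim_row B'" "Suc k \<le> dim_col B'" "ent B' (Suc k) (Suc k) \<noteq> 0"
    unfolding diag_elim_upto_def by force
  have "B' = B" using B B'(1) by simp
  have Bc: "B \<in> carrier_mat m n" using inv unfolding gjinv_def by auto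
  have k: "k < m" "k < n" and piv: "B $$ (k,k) \<noteq> 0" using B' \<open>B' = B\<close> Bc by (auto simp: ent_def)
  have "gj_seq A (2 * Suc k) = Some (gj_even (gj_odd B k * B) k * (gj_odd B k * B))"
  proof -
    have e: "2 * Suc k = Suc (Suc (2*k))" by simp
    have d1: "(2*k) div 2 = k" by simp
    have d2: "Suc (2*k) div 2 = k" by simp
    have o: "\<not> even (Suc (2*k))" by simp
    show ?thesis unfolding e gj_seq.simps B using d1 d2 o k piv Bc by simp
  qed
  with gjinv_step[OF inv A k piv] show ?case by blast
qed

definition rf :: "nat \<Rightarrow> nat \<Rightarrow> nat \<Rightarrow> nat" where "rf k i p = (if p < k then p else p + i - k)"
definition hf :: "nat \<Rightarrow> nat \<Rightarrow> nat" where "hf i q = (if q < i then q else Suc q)"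

lemma rf_mono: "k \<le> i \<Longrightarrow> strict_mono (rf k i)"
  unfolding strict_mono_def rf_def by auto
lemma hf_mono: "strict_mono (hf i)"
  unfolding strict_mono_def hf_def by auto

lemma det_F1:
  assumes inv: "gjinv A m n k B E" and A: "A \<in> carrier_mat m n" and k: "k \<le> m" "k \<le> n"
  shows "det (sub E id id k k) * det (sub A id id k k) = 1"
proof -
  from inv have B: "B \<in> carrier_mat m n" and E: "E \<in> carrier_mat m m" and BE: "B = E * A"
    and Ec: "\<And>i l. i < m \<Longrightarrow> l < m \<Longrightarrow> k \<le> l \<Longrightarrow> E $$ (i,l) = (if i = l then 1 else 0)"
    and Bc: "\<And>i j. i < m \<Longrightarrow> j < k \<Longrightarrow> B $$ (i,j) = (if i = j then 1 else 0)"
    unfolding gjinv_def by auto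
  have "sub B id id k k = 1\<^sub>m k" by (rule eq_matI) (use Bc k in auto)
  moreover have "sub B id id k k = sub E id id k k * sub A id id k k"
    unfolding BE by (rule sub_mult[OF E A]) (use k Ec in auto)
  ultimately have "det (sub E id id k k * sub A id id k k) = 1" by simp
  then show ?thesis by (simp add: det_mult[of _ k])
qed

lemma det_F2:
  assumes inv: "gjinv A m n k B E" and A: "A \<in> carrier_mat m n" and k: "k \<le> i" "i < m" "k < n"
  shows "B $$ (i,k) = det (sub E id id k k) * det (sub A (rf k i) id (Suc k) (Suc k))"
proof -
  from inv have B: "B \<in> carrier_mat m n" and E: "E \<in> carrier_mat m m" and BE: "B = E * A"
    and Ec: "\<And>i l. i < m \<Longrightarrow> l < m \<Longrightarrow> k \<le> l \<Longrightarrow> E $$ (i,l) = (if i = l then 1 else 0)"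
    and Bc: "\<And>i j. i < m \<Longrightarrow> j < k \<Longrightarrow> B $$ (i,j) = (if i = j then 1 else 0)"
    unfolding gjinv_def by auto
  let ?f = "rf k i"
  have fr: "\<forall>p<Suc k. ?f p < m" using k by (auto simp: rf_def)
  have img: "?f ` {..<Suc k} = insert i {..<k}"
  proof
    show "?f ` {..<Suc k} \<subseteq> insert i {..<k}" by (auto simp: rf_def)
    show "insert i {..<k} \<subseteq> ?f ` {..<Suc k}"
    proof
      fix x assume "x \<in> insert i {..<k}"
      then show "x \<in> ?f ` {..<Suc k}"
      proof
        assume "x = i" then have "x = ?f k" using k by (simp add: rf_def)
        then show ?thesis by auto
      next
        assume "x \<in> {..<k}" then have "x = ?f x" by (simp add: rf_def)
        then show ?thesis using \<open>x \<in> {..<k}\<close> by (metis image_eqI lessThan_iff less_SucI)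
      qed
    qed
  qed
  have prod: "sub B ?f id (Suc k) (Suc k) = sub E ?f ?f (Suc k) (Suc k) * sub A ?f id (Suc k) (Suc k)"
    unfolding BE
  proof (rule sub_mult[OF E A])
    show "inj_on ?f {..<Suc k}" using strict_mono_imp_inj_on[OF rf_mono[OF k(1)]] by (simp add: inj_on_subset)
    show "\<forall>p<Suc k. ?f p < m" by (rule fr)
    show "\<forall>q<Suc k. id q < n" using k by auto
    show "\<forall>p<Suc k. \<forall>l<m. l \<notin> ?f ` {..<Suc k} \<longrightarrow> E $$ (?f p, l) = 0"
    proof (intro allI impI)
      fix p l assume p: "p < Suc k" and l: "l < m" and ln0: "l \<notin> ?f ` {..<Suc k}"
      have ln: "l \<notin> insert i {..<k}" using ln0 img by simp
      have "?f p \<in> insert i {..<k}" using p by (auto simp: rf_def)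
      then have "?f p \<noteq> l" using ln by auto
      moreover have "k \<le> l" using ln by auto
      ultimately show "E $$ (?f p, l) = 0" using Ec[of "?f p" l] fr p l by auto
    qed
  qed
  have dB: "det (sub B ?f id (Suc k) (Suc k)) = B $$ (i,k)"
  proof -
    have ut: "upper_triangular (sub B ?f id (Suc k) (Suc k))"
      unfolding upper_triangular_def using Bc fr k by (auto simp: rf_def)
    have "det (sub B ?f id (Suc k) (Suc k)) = prod_list (map (\<lambda>p. sub B ?f id (Suc k) (Suc k) $$ (p,p)) [0..<Suc k])"
      using det_upper_triangular[OF ut sub_carrier] by (simp add: diag_mat_def)
    also have "\<dots> = prod_list (map (\<lambda>p. sub B ?f id (Suc k) (Suc k) $$ (p,p)) [0..<k]) * B $$ (i,k)"
      using k by (simp add: rf_def)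
    also have "map (\<lambda>p. sub B ?f id (Suc k) (Suc k) $$ (p,p)) [0..<k] = map (\<lambda>p. 1) [0..<k]"
      using Bc k by (auto simp: rf_def)
    finally show ?thesis by (simp add: prod_list_replicate id_def map_replicate_const)
  qed
  have dE: "det (sub E ?f ?f (Suc k) (Suc k)) = det (sub E id id k k)"
  proof -
    let ?M = "sub E ?f ?f (Suc k) (Suc k)"
    have "det ?M = (\<Sum>p<Suc k. ?M $$ (p,k) * cofactor ?M p k)"
      by (rule laplace_expansion_column[OF sub_carrier]) simp
    also have "\<dots> = (\<Sum>p<Suc k. if p = k then cofactor ?M k k else 0)"
      by (rule sum.cong) (use k fr Ec in \<open>auto simp: rf_def\<close>)
    also have "\<dots> = cofactor ?M k k" by simp
    also have "mat_delete ?M k k = sub E id id k k"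
      unfolding mat_delete_def by (rule eq_matI) (auto simp: rf_def)
    then have "cofactor ?M k k = det (sub E id id k k)"
      unfolding cofactor_def by (simp add: power_add[symmetric] mult_2[symmetric])
    finally show ?thesis .
  qed
  show ?thesis using prod dB dE
    by (metis det_mult sub_carrier)
qed

lemma det_F3:
  assumes inv: "gjinv A m n k B E" and A: "A \<in> carrier_mat m n" and k: "i < k" "k \<le> m" "k < n"
  shows "(-1)^(i+k-1) * B $$ (i,k) = det (sub E id id k k) * det (sub A id (hf i) k k)"
proof -
  from inv have B: "B \<in> carrier_mat m n" and E: "E \<in> carrier_mat m m" and BE: "B = E * A"
    and Ec: "\<And>i l. i < m \<Longrightarrow> l < m \<Longrightarrow> k \<le> l \<Longrightarrow> E $$ (i,l) = (if i = l then 1 else 0)"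
    and Bc: "\<And>i j. i < m \<Longrightarrow> j < k \<Longrightarrow> B $$ (i,j) = (if i = j then 1 else 0)"
    unfolding gjinv_def by auto
  have prod: "sub B id (hf i) k k = sub E id id k k * sub A id (hf i) k k"
    unfolding BE by (rule sub_mult[OF E A]) (use k Ec in \<open>auto simp: hf_def\<close>)
  obtain k0 where k0: "k = Suc k0" using k by (cases k) auto
  let ?M = "sub B id (hf i) k k"
  have "det ?M = (\<Sum>q<k. ?M $$ (i,q) * cofactor ?M i q)"
    by (rule laplace_expansion_row[OF sub_carrier]) (use k in simp)
  also have "\<dots> = (\<Sum>q<k. if q = k0 then B $$ (i,k) * cofactor ?M i k0 else 0)"
    by (rule sum.cong) (use k k0 Bc in \<open>auto simp: hf_def\<close>)
  also have "\<dots> = B $$ (i,k) * cofactor ?M i k0" using k0 by simp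
  also have "mat_delete ?M i k0 = 1\<^sub>m k0"
    unfolding mat_delete_def by (rule eq_matI) (use k k0 Bc in \<open>auto simp: hf_def\<close>)
  then have "cofactor ?M i k0 = (-1)^(i+k0)"
    unfolding cofactor_def by simp
  finally have "det ?M = B $$ (i,k) * (-1)^(i+k-1)" using k0 by (simp add: id_def)
  then show ?thesis using prod by (metis det_mult sub_carrier mult.commute)
qed


lemma img1: "(\<lambda>x. x - 1) ` {1..k} = id ` {..<(k::nat)}"
proof (rule Set.set_eqI)
  fix y show "y \<in> (\<lambda>x. x - 1) ` {1..k} \<longleftrightarrow> y \<in> id ` {..<k}"
    by (auto simp: image_iff intro!: bexI[of _ "Suc y"])
qed

lemma img2: "1 \<le> i \<Longrightarrow> i \<le> k \<Longrightarrow> (\<lambda>x. x - 1) ` ({1..k+1} - {i}) = hf (i - 1) ` {..<(k::nat)}"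
proof (rule Set.set_eqI)
  fix y assume "1 \<le> i" "i \<le> k"
  show "y \<in> (\<lambda>x. x - 1) ` ({1..k+1} - {i}) \<longleftrightarrow> y \<in> hf (i - 1) ` {..<k}"
  proof
    assume "y \<in> (\<lambda>x. x - 1) ` ({1..k+1} - {i})"
    then obtain x where x: "x \<in> {1..k+1}" "x \<noteq> i" "y = x - 1" by blast
    show "y \<in> hf (i - 1) ` {..<k}"
    proof (cases "x < i")
      case True then have "y = hf (i-1) y" "y < k" using x \<open>i \<le> k\<close> by (auto simp: hf_def)
      then show ?thesis by (metis image_eqI lessThan_iff)
    next
      case False then have "y = hf (i-1) (y - 1)" "y - 1 < k" using x \<open>1 \<le> i\<close> by (auto simp: hf_def)
      then show ?thesis by (metis image_eqI lessThan_iff)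
    qed
  next
    assume "y \<in> hf (i - 1) ` {..<k}"
    then obtain q where q: "q < k" "y = hf (i-1) q" by auto
    show "y \<in> (\<lambda>x. x - 1) ` ({1..k+1} - {i})"
    proof (cases "q < i - 1")
      case True then show ?thesis using q by (auto simp: hf_def image_iff intro!: bexI[of _ "Suc q"])
    next
      case False then show ?thesis using q \<open>1 \<le> i\<close> by (auto simp: hf_def image_iff intro!: bexI[of _ "Suc (Suc q)"])
    qed
  qed
qed

lemma img3: "k + 1 < i \<Longrightarrow> (\<lambda>x. x - 1) ` (insert i {1..k}) = rf k (i - 1) ` {..<Suc (k::nat)}"
proof (rule Set.set_eqI)
  fix y assume i: "k + 1 < i"
  show "y \<in> (\<lambda>x. x - 1) ` (insert i {1..k}) \<longleftrightarrow> y \<in> rf k (i - 1) ` {..<Suc k}"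
  proof
    assume "y \<in> (\<lambda>x. x - 1) ` (insert i {1..k})"
    then consider "y = i - 1" | "y < k" by auto
    then show "y \<in> rf k (i - 1) ` {..<Suc k}"
    proof cases
      case 1 then have "y = rf k (i-1) k" using i by (simp add: rf_def)
      then show ?thesis by auto
    next
      case 2 then have "y = rf k (i-1) y" by (simp add: rf_def)
      then show ?thesis using 2 by (metis image_eqI lessThan_iff less_SucI)
    qed
  next
    assume "y \<in> rf k (i - 1) ` {..<Suc k}"
    then obtain q where q: "q < Suc k" "y = rf k (i-1) q" by auto
    show "y \<in> (\<lambda>x. x - 1) ` (insert i {1..k})"
    proof (cases "q < k")
      case True then show ?thesis using q by (auto simp: rf_def image_iff intro!: bexI[of _ "Suc q"])
    next
      case False then have "y = i - 1" using q i by (auto simp: rf_def)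
      then show ?thesis by auto
    qed
  qed
qed

lemma rf_kk: "rf k k = id" by (auto simp: rf_def)


theorem theorem2p7:
  fixes A :: "real mat" and m n r k :: nat
  assumes "A \<in> carrier_mat m n"
    and "vec_space.rank m A = r"
    and "r > 1"
    and "diag_elim_upto A r"
    and "k < r"
  shows "\<exists>G1 G2. gj_op A (2*k+1) = Some G1 \<and> gj_op A (2*k+2) = Some G2
     \<and> G1 \<in> carrier_mat m m \<and> G2 \<in> carrier_mat m m
     \<and> (\<forall>i\<in>{1..m}. \<forall>j\<in>{1..m}. i \<noteq> j \<longrightarrow> ent G1 i j = 0)
     \<and> (\<forall>i\<in>{1..m}. i \<noteq> k+1 \<longrightarrow> ent G1 i i = 1)
     \<and> ent G1 (k+1) (k+1) = lminor A k / lminor A (k+1)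
     \<and> (\<forall>i\<in>{1..m}. \<forall>j\<in>{1..m}. j \<notin> {i, k+1} \<longrightarrow> ent G2 i j = 0)
     \<and> (\<forall>i\<in>{1..m}. ent G2 i i = 1)
     \<and> (\<forall>i. 1 \<le> i \<and> i \<le> k \<longrightarrow>
          ent G2 i (k+1) = (-1)^(k+i+1) * minor A {1..k} ({1..k+1} - {i}) / lminor A k)
     \<and> (\<forall>i. k+1 < i \<and> i \<le> m \<longrightarrow>
          ent G2 i (k+1) = - minor A (insert i {1..k}) {1..k+1} / lminor A k)"
proof -
  note A = assms(1) and de = assms(4)
  obtain B E where Bs: "gj_seq A (2*k) = Some B" and inv: "gjinv A m n k B E"
    using gjinv_exists[OF A de, of k] assms(5) by auto
  from de assms(5) obtain B' where B': "gj_seq A (2 * Suc k - 2) = Some B'"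
    "Suc k \<le> dim_row B'" "Suc k \<le> dim_col B'" "ent B' (Suc k) (Suc k) \<noteq> 0"
    unfolding diag_elim_upto_def by force
  have "B' = B" using Bs B'(1) by simp
  have Bc: "B \<in> carrier_mat m n" using inv unfolding gjinv_def by auto
  have km: "k < m" and kn: "k < n" and piv: "B $$ (k,k) \<noteq> 0"
    using B' \<open>B' = B\<close> Bc by (auto simp: ent_def)
  define G1 where "G1 = gj_odd B k"
  define B1 where "B1 = G1 * B"
  define G2 where "G2 = gj_even B1 k"
  have G1c: "G1 \<in> carrier_mat m m" using Bc by (simp add: G1_def)
  have B1c: "B1 \<in> carrier_mat m n" using G1c Bc by (simp add: B1_def)
  have G2c: "G2 \<in> carrier_mat m m" using B1c by (simp add: G2_def)
  have op1: "gj_op A (2*k+1) = Some G1"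
    using Bs km kn piv Bc by (simp add: G1_def)
  have s1: "gj_seq A (Suc (2*k)) = Some B1"
    using Bs km kn piv Bc by (simp add: G1_def B1_def)
  have op2: "gj_op A (2*k+2) = Some G2"
  proof -
    have e: "2*k+2 = Suc (Suc (2*k))" by simp
    have d2: "Suc (2*k) div 2 = k" by simp
    show ?thesis unfolding e gj_op.simps s1 using d2 by (simp add: G2_def)
  qed
  have B1k: "B1 $$ (p,k) = (if p = k then 1 else B $$ (p,k))" if "p < m" for p
    unfolding B1_def G1_def using gj_odd_mult[OF Bc Bc that kn km] piv by simp
  have G2e: "G2 $$ (p,q) = (if p = q then 1 else if q = k then - B1 $$ (p,k) else 0)"
    if "p < m" "q < m" for p q
    using that B1c by (simp add: G2_def gj_even_def)
  have G1e: "G1 $$ (p,q) = (if p = q then (if p = k then 1 / B $$ (k,k) else 1) else 0)"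
    if "p < m" "q < m" for p q
    using that Bc by (simp add: G1_def gj_odd_def)
  define d where "d = det (sub E id id k k)"
  have lmk: "lminor A k = det (sub A id id k k)"
    unfolding lminor_def minor_def img1
    by (rule arg_cong[where f=det], rule submatrix_sub) (use A km kn in \<open>auto simp: strict_mono_def\<close>)
  have lmk1: "lminor A (k+1) = det (sub A (rf k k) id (Suc k) (Suc k))"
    unfolding lminor_def minor_def img1 rf_kk Suc_eq_plus1
    by (rule arg_cong[where f=det], rule submatrix_sub) (use A km kn in \<open>auto simp: strict_mono_def\<close>)
  have dm: "d * lminor A k = 1" unfolding d_def lmk using det_F1[OF inv A] km kn by simp
  then have mk0: "lminor A k \<noteq> 0" by auto
  have dinv: "d = 1 / lminor A k" using dm mk0 by (simp add: field_simps)
  have pivv: "B $$ (k,k) = d * lminor A (k+1)"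
    unfolding d_def lmk1 using det_F2[OF inv A le_refl km kn] .
  have ent1: "ent G1 (k+1) (k+1) = lminor A k / lminor A (k+1)"
    using G1e[OF km km] pivv dinv by (simp add: ent_def)
  have entA: "ent G2 i (k+1) = (-1)^(k+i+1) * minor A {1..k} ({1..k+1} - {i}) / lminor A k"
    if hi: "1 \<le> i" "i \<le> k" for i
  proof -
    have mi: "minor A {1..k} ({1..k+1} - {i}) = det (sub A id (hf (i-1)) k k)"
      unfolding minor_def img1 img2[OF that]
      by (rule arg_cong[where f=det], rule submatrix_sub)
        (use A km kn hf_mono in \<open>auto simp: hf_def strict_mono_def\<close>)
    have F3: "(-1)^(i-1+k-1) * B $$ (i-1,k) = d * minor A {1..k} ({1..k+1} - {i})"
      unfolding mi d_def by (rule det_F3[OF inv A]) (use that km kn in auto)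
    have ne: "i - 1 \<noteq> k" "i - 1 < m" using that km by auto
    have ent: "ent G2 i (k+1) = - B $$ (i-1,k)"
      using G2e[OF ne(2) km] B1k[OF ne(2)] ne(1) by (simp add: ent_def)
    obtain j where j: "i = Suc j" using hi by (cases i) auto
    obtain k0 where k0: "k = Suc k0" using hi by (cases k) auto
    have s: "((-1::real)^(j+k0))^2 = 1" by (simp add: power_mult[symmetric] power_mult_distrib)
    have "B $$ (i-1,k) = (-1)^(j+k0) * (d * minor A {1..k} ({1..k+1} - {i}))"
    proof -
      have e1: "(-1::real)^(j+k0) * ((-1)^(j+k0) * B $$ (i-1,k)) = B $$ (i-1,k)"
        using s by (simp add: power2_eq_square)
      have e2: "(-1::real)^(j+k0) * B $$ (i-1,k) = d * minor A {1..k} ({1..k+1} - {i})"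
        using F3 j k0 by simp
      show ?thesis using e1 e2 by metis
    qed
    moreover have "(-1::real)^(k+i+1) = - ((-1)^(j+k0))" using j k0 by (simp add: add.commute)
    ultimately show ?thesis using ent dinv by simp
  qed
  have entB: "ent G2 i (k+1) = - minor A (insert i {1..k}) {1..k+1} / lminor A k"
    if "k+1 < i" "i \<le> m" for i
  proof -
    have mi: "minor A (insert i {1..k}) {1..k+1} = det (sub A (rf k (i-1)) id (Suc k) (Suc k))"
      unfolding minor_def img3[OF that(1)] Suc_eq_plus1 img1
      by (rule arg_cong[where f=det], rule submatrix_sub)
        (use A km kn rf_mono[of k "i-1"] that in \<open>auto simp: rf_def strict_mono_def\<close>)
    have F2: "B $$ (i-1,k) = d * minor A (insert i {1..k}) {1..k+1}"
      unfolding mi d_def by (rule det_F2[OF inv A]) (use that km kn in auto)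
    have ne: "i - 1 \<noteq> k" "i - 1 < m" using that km by auto
    have ent: "ent G2 i (k+1) = - B $$ (i-1,k)"
      using G2e[OF ne(2) km] B1k[OF ne(2)] ne(1) by (simp add: ent_def)
    show ?thesis using ent F2 dinv by simp
  qed
  have c1: "\<forall>i\<in>{1..m}. \<forall>j\<in>{1..m}. i \<noteq> j \<longrightarrow> ent G1 i j = 0"
  proof (intro ballI impI)
    fix i j assume "i \<in> {1..m}" "j \<in> {1..m}" "i \<noteq> j"
    then have "i - 1 < m" "j - 1 < m" "i - 1 \<noteq> j - 1" by auto
    then show "ent G1 i j = 0" using G1e by (simp add: ent_def)
  qed
  have c2: "\<forall>i\<in>{1..m}. i \<noteq> k+1 \<longrightarrow> ent G1 i i = 1"
  proof (intro ballI impI)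
    fix i assume "i \<in> {1..m}" "i \<noteq> k+1"
    then have "i - 1 < m" "i - 1 \<noteq> k" by auto
    then show "ent G1 i i = 1" using G1e by (simp add: ent_def)
  qed
  have c3: "\<forall>i\<in>{1..m}. \<forall>j\<in>{1..m}. j \<notin> {i, k+1} \<longrightarrow> ent G2 i j = 0"
  proof (intro ballI impI)
    fix i j assume "i \<in> {1..m}" "j \<in> {1..m}" "j \<notin> {i, k+1}"
    then have "i - 1 < m" "j - 1 < m" "i - 1 \<noteq> j - 1" "j - 1 \<noteq> k" by auto
    then show "ent G2 i j = 0" using G2e by (simp add: ent_def)
  qed
  have c4: "\<forall>i\<in>{1..m}. ent G2 i i = 1"
  proof
    fix i assume "i \<in> {1..m}"
    then have "i - 1 < m" by auto
    then show "ent G2 i i = 1" using G2e by (simp add: ent_def)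
  qed
  show ?thesis
    using op1 op2 G1c G2c c1 c2 ent1 c3 c4 entA entB by blast
qed

end
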